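(* Let $A=[a_{ijk}]=[A_1,\ldots,A_n]$ be an $n\times n\times n$ PASHM and $L(A)=1A_1+2A_2+\cdots+nA_n=[l_{ij}]$. Then every row sum and every column sum of $L(A)$ equals $\binom{n+1}{2}$. If moreover $A$ is an ASHM, then: (i) every entry of $L(A)$ lies in $\{1,\ldots,n\}$, and the first and last rows and the first and last columns of $L(A)$ are permutations of $1,2,\ldots,n$; (ii) fix $i,j$ and let $1\le k_1<k_2<\cdots<k_p\le n$ ($p\ge1$) be the indices $k$ with $a_{ijk}\neq 0$. Let $r=l_{ij}$. Then (iia) $k_1\le r$ and $p\le 2r-1$; moreover $k_1=r$ implies $p=1$; in particular, if $l_{ij}=1$ then $a_{ij1}=1$ and $a_{ijk}=0$ for $1<k\le n$. (iib) $p\le 2(n-r)+1$; in particular, if $l_{ij}=n$ then $a_{ijn}=1$ and $a_{ijk}=0$ for $1\le k<n$.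
   Context: An $n\times n$ alternating sign matrix (ASM) is an $n\times n$ matrix with entries in $\{0,1,-1\}$ such that in every row and column the nonzeros alternate in sign, beginning and ending with $+1$. An $n\times n\times n$ hypermatrix $A=[a_{ijk}]$ is written $A=[A_1,\ldots,A_n]$ with $A_k=[a_{ijk}]_{i,j}$ its $k$-th horizontal plane; its vertical lines are $(a_{ijk})_{k=1}^n$ for fixed $i,j$. $A$ is a planar alternating sign hypermatrix (PASHM) if each horizontal plane $A_k$ is an ASM and each vertical line sums to $1$. $A$ is an alternating sign hypermatrix (ASHM) if all entries lie in $\{0,\pm1\}$ and in every line (fixing any two of the three indices) the nonzeros alternate in sign beginning and ending with $+1$; every ASHM is a PASHM. *)

theory Defs
  imports Main
begin

text \<open>Indices run over 1..n as in the paper. A hypermatrix is a function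
  nat => nat => nat => int, with entry a i j k; only indices in 1..n matter.\<close>

definition alt_sign :: "int list \<Rightarrow> bool" where
  "alt_sign xs \<longleftrightarrow> set xs \<subseteq> {-1, 0, 1} \<and>
     (let ys = filter (\<lambda>x. x \<noteq> 0) xs in
        ys \<noteq> [] \<and> odd (length ys) \<and>
        (\<forall>t < length ys. ys ! t = (if even t then 1 else -1)))"

definition is_ASM :: "nat \<Rightarrow> (nat \<Rightarrow> nat \<Rightarrow> int) \<Rightarrow> bool" where
  "is_ASM n M \<longleftrightarrow>
     (\<forall>i \<in> {1..n}. alt_sign (map (\<lambda>j. M i j) [1..<n+1])) \<and>
     (\<forall>j \<in> {1..n}. alt_sign (map (\<lambda>i. M i j) [1..<n+1]))"

definition is_PASHM :: "nat \<Rightarrow> (nat \<Rightarrow> nat \<Rightarrow> nat \<Rightarrow> int) \<Rightarrow> bool" where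
  "is_PASHM n A \<longleftrightarrow>
     (\<forall>k \<in> {1..n}. is_ASM n (\<lambda>i j. A i j k)) \<and>
     (\<forall>i \<in> {1..n}. \<forall>j \<in> {1..n}. (\<Sum>k = 1..n. A i j k) = 1)"

definition is_ASHM :: "nat \<Rightarrow> (nat \<Rightarrow> nat \<Rightarrow> nat \<Rightarrow> int) \<Rightarrow> bool" where
  "is_ASHM n A \<longleftrightarrow>
     (\<forall>i \<in> {1..n}. \<forall>j \<in> {1..n}. \<forall>k \<in> {1..n}. A i j k \<in> {-1, 0, 1}) \<and>
     (\<forall>i \<in> {1..n}. \<forall>j \<in> {1..n}. alt_sign (map (\<lambda>k. A i j k) [1..<n+1])) \<and>
     (\<forall>i \<in> {1..n}. \<forall>k \<in> {1..n}. alt_sign (map (\<lambda>j. A i j k) [1..<n+1])) \<and>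
     (\<forall>j \<in> {1..n}. \<forall>k \<in> {1..n}. alt_sign (map (\<lambda>i. A i j k) [1..<n+1]))"

definition Lmat :: "nat \<Rightarrow> (nat \<Rightarrow> nat \<Rightarrow> nat \<Rightarrow> int) \<Rightarrow> nat \<Rightarrow> nat \<Rightarrow> int" where
  "Lmat n A i j = (\<Sum>k = 1..n. int k * A i j k)"

end

theory Submission
  imports Defs
begin


lemma sum01:
  assumes "finite S" "\<forall>k\<in>S. h k \<in> {0,1::int}"
  shows "sum h S = int (card {k\<in>S. h k = 1})"
proof -
  have "sum h S = (\<Sum>k\<in>S. if h k = 1 then 1 else 0)" using assms(2) by (intro sum.cong) auto
  also have "\<dots> = int (card {k\<in>S. h k = 1})"
    using assms(1) by (simp add: sum.If_cases Int_def conj_commute)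
  finally show ?thesis .
qed

lemma sum_list_filter_nz: "sum_list (filter (\<lambda>x. x \<noteq> 0) xs) = sum_list (xs::int list)"
  by (induction xs) auto

lemma alt_take_sum:
  assumes "\<forall>t<length ys. ys ! t = (if even t then 1 else -1)" "j \<le> length ys"
  shows "sum_list (take j (ys::int list)) = (if even j then 0 else 1)"
  using assms(2)
proof (induction j)
  case 0 then show ?case by simp
next
  case (Suc j)
  then have "j < length ys" by simp
  then have "take (Suc j) ys = take j ys @ [ys!j]" by (simp add: take_Suc_conv_app_nth)
  with Suc assms(1) \<open>j < length ys\<close> show ?case by auto
qed

lemma alt_prefix:
  assumes "alt_sign xs" "m \<le> length xs"
  shows "sum_list (take m xs) \<in> {0,1}"
proof -
  define ys where "ys = filter (\<lambda>x. x \<noteq> (0::int)) xs"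
  define a where "a = filter (\<lambda>x. x \<noteq> (0::int)) (take m xs)"
  have ys: "ys = a @ filter (\<lambda>x. x\<noteq>0) (drop m xs)" unfolding ys_def a_def
    by (metis append_take_drop_id filter_append)
  hence ta: "a = take (length a) ys" by simp
  have la: "length a \<le> length ys" using ys by simp
  have alt: "\<forall>t<length ys. ys ! t = (if even t then 1 else -1)"
    using assms(1) unfolding alt_sign_def ys_def Let_def by blast
  have "sum_list (take m xs) = sum_list a" unfolding a_def by (simp add: sum_list_filter_nz)
  also have "\<dots> = sum_list (take (length a) ys)" using ta by simp
  also have "\<dots> = (if even (length a) then 0 else 1)" using alt_take_sum[OF alt la] .
  finally show ?thesis by auto
qed

lemma alt_total:
  assumes "alt_sign xs" shows "sum_list xs = 1"
proof -
  define ys where "ys = filter (\<lambda>x. x \<noteq> (0::int)) xs"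
  have alt: "\<forall>t<length ys. ys ! t = (if even t then 1 else -1)" and od: "odd (length ys)"
    using assms(1) unfolding alt_sign_def ys_def Let_def by blast+
  have "sum_list xs = sum_list (take (length ys) ys)" by (simp add: ys_def sum_list_filter_nz)
  also have "\<dots> = 1" using alt_take_sum[OF alt, of "length ys"] od by simp
  finally show ?thesis .
qed

lemma alt_fun:
  assumes alt: "alt_sign (map f [1..<n+1])"
  shows "n \<ge> 1 \<and> (\<forall>k\<in>{1..n}. f k \<in> {-1,0,1}) \<and> (\<forall>m\<le>n. sum f {1..m} \<in> {0,1}) \<and> sum f {1..n} = 1"
proof -
  have sl: "sum_list (map f [1..<m+1]) = sum f {1..m}" for m
    by (metis Suc_eq_plus1 atLeastLessThanSuc_atLeastAtMost set_upt sum_set_upt_conv_sum_list_nat)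
  have n1: "n \<ge> 1"
  proof (rule ccontr)
    assume "\<not> n \<ge> 1" then have "n = 0" by simp
    with alt show False by (simp add: alt_sign_def)
  qed
  have st: "set (map f [1..<n+1]) \<subseteq> {-1,0,1}" using alt unfolding alt_sign_def by blast
  have "\<forall>k\<in>{1..n}. f k \<in> {-1,0,1}"
  proof
    fix k assume "k \<in> {1..n}"
    then have "k \<in> set [1..<n+1]" by auto
    then have "f k \<in> set (map f [1..<n+1])" by (simp only: set_map) (rule imageI)
    with st show "f k \<in> {-1,0,1}" by blast
  qed
  moreover have "\<forall>m\<le>n. sum f {1..m} \<in> {0,1}"
  proof (intro allI impI)
    fix m assume "m \<le> n"
    then have "take m [1..<n+1] = [1..<1+m]" by (intro take_upt) simp
    then have "take m (map f [1..<n+1]) = map f [1..<m+1]" by (simp add: take_map add.commute)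
    moreover have "m \<le> length (map f [1..<n+1])" using \<open>m \<le> n\<close> by (simp only: length_map length_upt)
    ultimately show "sum f {1..m} \<in> {0,1}" using alt_prefix[OF alt, of m] by (simp only: sl)
  qed
  moreover have "sum f {1..n} = 1" using alt_total[OF alt] sl by simp
  ultimately show ?thesis using n1 by blast
qed

lemma abel:
  "(\<Sum>k=1..n. int k * f k) + (\<Sum>k=1..n. sum f {1..k-1}) = int n * sum (f::nat\<Rightarrow>int) {1..n}"
proof (induction n)
  case 0 then show ?case by simp
next
  case (Suc n)
  define S where "S = sum f {1..n}"
  have e1: "(\<Sum>k=1..Suc n. int k * f k) = (\<Sum>k=1..n. int k * f k) + int (Suc n) * f (Suc n)"
    by (rule sum.cl_ivl_Suc[THEN trans]) simp
  have e2: "(\<Sum>k=1..Suc n. sum f {1..k-1}) = (\<Sum>k=1..n. sum f {1..k-1}) + S"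
    by (rule sum.cl_ivl_Suc[THEN trans]) (simp add: S_def)
  have e3: "sum f {1..Suc n} = S + f (Suc n)" 
    by (rule sum.cl_ivl_Suc[THEN trans]) (simp add: S_def)
  have e4: "int (Suc n) * (S + f (Suc n)) = int n * S + S + int (Suc n) * f (Suc n)"
    by (simp add: algebra_simps)
  show ?case unfolding e1 e2 e3 e4 using Suc.IH unfolding S_def by linarith
qed
lemma gauss: "(\<Sum>k=1..n. int k) = int ((n + 1) choose 2)"
proof -
  have a: "(\<Sum>k=1..n. k) = n*(n+1) div (2::nat)" using gauss_sum_from_Suc_0[of n, where 'a=nat] by simp
  have b: "(n + 1) choose 2 = n*(n+1) div 2" using choose_two[of "n+1"] by (simp only: add_diff_cancel_right' mult.commute)
  have c: "(\<Sum>k=1..n. int k) = int (\<Sum>k=1..n. k)" by simp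
  show ?thesis unfolding c a b ..
qed


lemma line:
  fixes f :: "nat \<Rightarrow> int"
  assumes alt: "alt_sign (map f [1..<n+1])"
  defines "K \<equiv> {k\<in>{1..n}. f k \<noteq> 0}" and "r \<equiv> (\<Sum>k=1..n. int k * f k)"
  shows "K \<noteq> {} \<and> r \<in> {1..int n} \<and> int (Min K) \<le> r \<and> int (card K) \<le> 2*r - 1 \<and>
     (int (Min K) = r \<longrightarrow> card K = 1) \<and> (r = 1 \<longrightarrow> f 1 = 1 \<and> (\<forall>k\<in>{2..n}. f k = 0)) \<and>
     int (card K) \<le> 2*(int n - r) + 1 \<and> (r = int n \<longrightarrow> f n = 1 \<and> (\<forall>k\<in>{1..<n}. f k = 0))"
proof -
  define S where "S m = sum f {1..m}" for m
  from alt_fun[OF alt] have n1: "n \<ge> 1" and F1: "\<forall>k\<in>{1..n}. f k \<in> {-1,0,1}"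
    and F2: "\<forall>m\<le>n. S m \<in> {0,1}" and F3: "S n = 1" by (auto simp: S_def)
  have Sstep: "S k = S (k-1) + f k" if "k \<ge> 1" for k
    using that by (cases k) (auto simp: S_def)
  define Z where "Z = {k\<in>{1..n}. S (k-1) = 0}"
  have h01: "\<forall>k\<in>{1..n}. 1 - S (k-1) \<in> {0,1}"
  proof
    fix k assume "k \<in> {1..n}"
    then have "k - 1 \<le> n" by auto
    with F2 have "S (k-1) \<in> {0,1}" by blast
    then show "1 - S (k-1) \<in> {0,1}" by auto
  qed
  have rZ: "r = int (card Z)"
  proof -
    have "r + (\<Sum>k=1..n. S (k-1)) = int n * S n" using abel unfolding r_def S_def .
    hence "r = (\<Sum>k=1..n. 1 - S (k-1))" using F3 by (simp add: sum_subtractf)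
    also have "\<dots> = int (card {k\<in>{1..n}. 1 - S (k-1) = 1})" by (rule sum01) (use h01 in auto)
    also have "{k\<in>{1..n}. 1 - S (k-1) = 1} = Z" by (auto simp: Z_def)
    finally show ?thesis .
  qed
  define U where "U = {k\<in>{1..n}. f k = 1}"
  define D where "D = {k\<in>{1..n}. f k = -1}"
  have KUD: "K = U \<union> D" "U \<inter> D = {}" using F1 by (auto simp: K_def U_def D_def)
  have finU: "finite U" and finD: "finite D" and finK: "finite K" by (auto simp: U_def D_def K_def)
  have cK: "card K = card U + card D" using KUD finU finD by (simp add: card_Un_disjoint)
  have sumUD: "int (card U) = int (card D) + 1"
  proof -
    have "sum f {1..n} = (\<Sum>k=1..n. (if f k = 1 then 1 else 0) - (if f k = -1 then 1 else 0))"
      using F1 by (intro sum.cong) auto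
    also have "\<dots> = (\<Sum>k=1..n. (if f k = 1 then 1 else 0)) - (\<Sum>k=1..n. (if f k = -1 then 1 else 0))"
      by (simp add: sum_subtractf)
    also have "(\<Sum>k=1..n. (if f k = 1 then 1 else (0::int))) = int (card U)"
    proof -
      have "(\<Sum>k=1..n. (if f k = 1 then 1 else (0::int))) = int (card {k\<in>{1..n}. (if f k = 1 then 1 else (0::int)) = 1})"
        by (rule sum01) auto
      also have "{k\<in>{1..n}. (if f k = 1 then 1 else (0::int)) = 1} = U" by (auto simp: U_def)
      finally show ?thesis .
    qed
    also have "(\<Sum>k=1..n. (if f k = -1 then 1 else (0::int))) = int (card D)"
    proof -
      have "(\<Sum>k=1..n. (if f k = -1 then 1 else (0::int))) = int (card {k\<in>{1..n}. (if f k = -1 then 1 else (0::int)) = 1})"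
        by (rule sum01) auto
      also have "{k\<in>{1..n}. (if f k = -1 then 1 else (0::int)) = 1} = D" by (auto simp: D_def)
      finally show ?thesis .
    qed
    finally show ?thesis using F3 by (simp add: S_def)
  qed
  have UZ: "U \<subseteq> Z"
  proof
    fix k assume "k \<in> U"
    hence k: "k \<in> {1..n}" "f k = 1" by (auto simp: U_def)
    have "k - 1 \<le> n" "k \<le> n" "k \<ge> 1" using k by auto
    then have "S k \<in> {0,1}" "S (k-1) \<in> {0,1}" "S k = S (k-1) + f k" using F2 Sstep by blast+
    then show "k \<in> Z" using k by (auto simp: Z_def)
  qed
  have DZ: "D \<subseteq> {1..n} - Z"
  proof
    fix k assume "k \<in> D"
    hence k: "k \<in> {1..n}" "f k = -1" by (auto simp: D_def)
    have "k - 1 \<le> n" "k \<le> n" "k \<ge> 1" using k by auto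
    then have "S k \<in> {0,1}" "S (k-1) \<in> {0,1}" "S k = S (k-1) + f k" using F2 Sstep by blast+
    then show "k \<in> {1..n} - Z" using k by (auto simp: Z_def)
  qed
  have Zsub: "Z \<subseteq> {1..n}" by (auto simp: Z_def)
  have cZ: "card Z \<le> n" using card_mono[OF _ Zsub] by simp
  have cU: "card U \<le> card Z" by (rule card_mono) (use Zsub UZ finite_subset in auto)
  have cD: "card D \<le> n - card Z"
  proof -
    have "card D \<le> card ({1..n} - Z)" by (rule card_mono) (use DZ in auto)
    also have "\<dots> = n - card Z" using Zsub by (simp add: card_Diff_subset finite_subset)
    finally show ?thesis .
  qed
  have "U \<noteq> {}" using sumUD by auto
  hence Kne: "K \<noteq> {}" using KUD by auto
  define k1 where "k1 = Min K"
  have k1K: "k1 \<in> K" unfolding k1_def using finK Kne by (rule Min_in)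
  hence k1r: "k1 \<in> {1..n}" by (auto simp: K_def)
  have below: "f k = 0" if "1 \<le> k" "k < k1" for k
  proof (rule ccontr)
    assume "f k \<noteq> 0"
    with that k1r have "k \<in> K" by (auto simp: K_def)
    hence "k1 \<le> k" unfolding k1_def using finK by simp
    with that show False by simp
  qed
  have initZ: "{1..k1} \<subseteq> Z"
  proof
    fix k assume k: "k \<in> {1..k1}"
    have "S (k-1) = 0" unfolding S_def by (rule sum.neutral) (use k below in auto)
    then show "k \<in> Z" using k k1r by (auto simp: Z_def)
  qed
  have finZ: "finite Z" using Zsub finite_subset by auto
  have k1Z: "k1 \<le> card Z" using card_mono[OF finZ initZ] by simp
  have single: "\<exists>k0\<in>{1..n}. f k0 = 1 \<and> K = {k0} \<and> r = int k0" if "card K = 1"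
  proof -
    from that cK sumUD have "card U = 1" "card D = 0" by auto
    then obtain k0 where U0: "U = {k0}" by (auto simp: card_Suc_eq)
    have "D = {}" using \<open>card D = 0\<close> finD by simp
    hence K0: "K = {k0}" using KUD U0 by simp
    have k0: "k0 \<in> {1..n}" "f k0 = 1" using U0 by (auto simp: U_def)
    have "r = (\<Sum>k\<in>{1..n}. if k = k0 then int k0 else 0)"
      unfolding r_def
    proof (rule sum.cong)
      fix k assume "k \<in> {1..n}"
      then show "int k * f k = (if k = k0 then int k0 else 0)"
        using K0 k0 by (cases "k = k0") (auto simp: K_def)
    qed simp
    also have "\<dots> = int k0" using k0 by simp
    finally show ?thesis using k0 K0 by blast
  qed
  have p1: "card K = 1" if "int k1 = r"
  proof -
    have "card Z = k1" using that rZ by simp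
    hence Zeq: "{1..k1} = Z" using card_subset_eq[OF finZ initZ] by simp
    have "U \<subseteq> {k1}"
    proof
      fix k assume "k \<in> U"
      hence "k \<in> {1..k1}" "f k = 1" using UZ Zeq by (auto simp: U_def)
      with below show "k \<in> {k1}" by (cases "k < k1") auto
    qed
    hence "card U \<le> 1" using card_mono[of "{k1}" U] by simp
    with cK sumUD show ?thesis by simp
  qed
  have r1: "r \<in> {1..int n}" using rZ cZ k1Z k1r by auto
  have A1: "int (card K) \<le> 2*r - 1" using cK sumUD cU rZ by simp
  have A2: "int (card K) \<le> 2*(int n - r) + 1" using cK sumUD cD rZ cZ by (simp add: of_nat_diff)
  have zero_out: "f k = 0" if "K = {k0}" "k \<in> {1..n}" "k \<noteq> k0" for k k0
  proof (rule ccontr)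
    assume "f k \<noteq> 0"
    with that(2) have "k \<in> K" by (simp add: K_def)
    with that show False by simp
  qed
  have A3: "r = 1 \<longrightarrow> f 1 = 1 \<and> (\<forall>k\<in>{2..n}. f k = 0)"
  proof
    assume r1': "r = 1"
    hence "int k1 = r" using k1Z rZ k1r by simp
    hence "card K = 1" by (rule p1)
    then obtain k0 where k0: "k0\<in>{1..n}" "f k0 = 1" "K = {k0}" "r = int k0" using single by blast
    hence "k0 = 1" using r1' by simp
    have "\<forall>k\<in>{2..n}. f k = 0"
    proof
      fix k assume "k \<in> {2..n}"
      then have "k \<in> {1..n}" "k \<noteq> k0" using \<open>k0 = 1\<close> by auto
      then show "f k = 0" using zero_out[OF k0(3)] by blast
    qed
    with k0 \<open>k0 = 1\<close> show "f 1 = 1 \<and> (\<forall>k\<in>{2..n}. f k = 0)" by simp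
  qed
  have A4: "r = int n \<longrightarrow> f n = 1 \<and> (\<forall>k\<in>{1..<n}. f k = 0)"
  proof
    assume rn: "r = int n"
    hence "card K \<le> 1" using A2 by simp
    moreover have "card K \<noteq> 0" using finK Kne by simp
    ultimately have "card K = 1" by simp
    then obtain k0 where k0: "k0\<in>{1..n}" "f k0 = 1" "K = {k0}" "r = int k0" using single by blast
    hence "k0 = n" using rn by simp
    have "\<forall>k\<in>{1..<n}. f k = 0"
    proof
      fix k assume "k \<in> {1..<n}"
      then have "k \<in> {1..n}" "k \<noteq> k0" using \<open>k0 = n\<close> by auto
      then show "f k = 0" using zero_out[OF k0(3)] by blast
    qed
    with k0 \<open>k0 = n\<close> show "f n = 1 \<and> (\<forall>k\<in>{1..<n}. f k = 0)" by simp
  qed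
  show ?thesis using Kne r1 k1Z rZ A1 p1 A3 A2 A4 unfolding k1_def by simp
qed

lemma one_of:
  fixes g :: "nat \<Rightarrow> int"
  assumes "\<forall>k\<in>{1..n}. g k \<in> {0,1}" "(\<Sum>k=1..n. g k) = 1"
  shows "\<exists>k0\<in>{1..n}. g k0 = 1 \<and> (\<forall>k\<in>{1..n}. g k = 1 \<longrightarrow> k = k0) \<and> (\<Sum>k=1..n. int k * g k) = int k0"
proof -
  have "int (card {k\<in>{1..n}. g k = 1}) = 1" using sum01[OF _ assms(1)] assms(2) by simp
  hence "card {k\<in>{1..n}. g k = 1} = 1" by simp
  then obtain k0 where k0: "{k\<in>{1..n}. g k = 1} = {k0}" by (auto simp: card_Suc_eq)
  hence k0': "k0 \<in> {1..n}" "g k0 = 1" by auto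
  have "(\<Sum>k=1..n. int k * g k) = (\<Sum>k\<in>{1..n}. if k = k0 then int k0 else 0)"
  proof (rule sum.cong)
    fix k assume k: "k \<in> {1..n}"
    show "int k * g k = (if k = k0 then int k0 else 0)"
    proof (cases "k = k0")
      case True then show ?thesis using k0' by simp
    next
      case False
      then have "g k \<noteq> 1" using k k0 by blast
      then have "g k = 0" using k assms(1) by blast
      with False show ?thesis by simp
    qed
  qed simp
  also have "\<dots> = int k0" using k0' by simp
  finally show ?thesis using k0 k0' by blast
qed

lemma perm_bij:
  fixes g :: "nat \<Rightarrow> nat \<Rightarrow> int"
  assumes e: "\<forall>j\<in>{1..n}. \<forall>k\<in>{1..n}. g j k \<in> {0,1}"
    and r: "\<forall>j\<in>{1..n}. (\<Sum>k=1..n. g j k) = 1"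
    and c: "\<forall>k\<in>{1..n}. (\<Sum>j=1..n. g j k) = 1"
  shows "bij_betw (\<lambda>j. \<Sum>k=1..n. int k * g j k) {1..n} {1..int n}"
proof -
  define \<sigma> where "\<sigma> j = (\<Sum>k=1..n. int k * g j k)" for j
  have row: "\<exists>k0\<in>{1..n}. g j k0 = 1 \<and> \<sigma> j = int k0" if "j \<in> {1..n}" for j
    using one_of[of n "g j"] e r that unfolding \<sigma>_def by blast
  have col: "j = j'" if "k \<in> {1..n}" "j \<in> {1..n}" "j' \<in> {1..n}" "g j k = 1" "g j' k = 1" for j j' k
  proof -
    have e': "\<forall>j\<in>{1..n}. g j k \<in> {0,1}" using e that(1) by blast
    have c': "(\<Sum>j=1..n. g j k) = 1" using c that(1) by blast
    obtain j0 where "\<forall>j\<in>{1..n}. g j k = 1 \<longrightarrow> j = j0"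
      using one_of[of n "\<lambda>j. g j k", OF e' c'] by blast
    with that show ?thesis by blast
  qed
  have inj: "inj_on \<sigma> {1..n}"
  proof (rule inj_onI)
    fix j j' assume j: "j \<in> {1..n}" and j': "j' \<in> {1..n}" and eq: "\<sigma> j = \<sigma> j'"
    obtain k where k: "k\<in>{1..n}" "g j k = 1" "\<sigma> j = int k" using row[OF j] by blast
    obtain k' where k': "k'\<in>{1..n}" "g j' k' = 1" "\<sigma> j' = int k'" using row[OF j'] by blast
    have "k = k'" using k k' eq by simp
    then show "j = j'" using col[OF k(1) j j'] k k' by simp
  qed
  have sub: "\<sigma> ` {1..n} \<subseteq> {1..int n}" using row by force
  have "card (\<sigma> ` {1..n}) = card {1..int n}" using card_image[OF inj] by simp
  hence "\<sigma> ` {1..n} = {1..int n}" using card_subset_eq[OF _ sub] by simp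
  with inj show ?thesis unfolding bij_betw_def \<sigma>_def by simp
qed



lemma tot: "alt_sign (map f [1..<n+1]) \<Longrightarrow> (\<Sum>k=1..n. f k) = 1"
  using alt_fun by blast

lemma end01:
  assumes alt: "alt_sign (map f [1..<n+1])"
  shows "f 1 \<in> {0,1} \<and> f n \<in> {0,1}"
proof -
  from alt_fun[OF alt] have n1: "n \<ge> 1" and F2: "\<forall>m\<le>n. sum f {1..m} \<in> {0,1}" and F3: "sum f {1..n} = 1"
    by auto
  have "sum f {1..1} \<in> {0,1}" using F2 n1 by blast
  hence a: "f 1 \<in> {0,1}" by simp
  obtain m where m: "n = Suc m" using n1 by (cases n) auto
  have "sum f {1..m} \<in> {0,1}" using F2 m by simp
  moreover have "sum f {1..n} = sum f {1..m} + f n" using m by simp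
  ultimately have "f n \<in> {0,1}" using F3 by auto
  with a show ?thesis by blast
qed

theorem mainTheorem3:
  fixes n :: nat and A :: "nat \<Rightarrow> nat \<Rightarrow> nat \<Rightarrow> int"
  assumes "is_PASHM n A"
  shows "(\<forall>i \<in> {1..n}. (\<Sum>j = 1..n. Lmat n A i j) = int ((n + 1) choose 2)) \<and>
         (\<forall>j \<in> {1..n}. (\<Sum>i = 1..n. Lmat n A i j) = int ((n + 1) choose 2)) \<and>
         (is_ASHM n A \<longrightarrow>
            (\<forall>i \<in> {1..n}. \<forall>j \<in> {1..n}. Lmat n A i j \<in> {1..int n}) \<and>
            bij_betw (\<lambda>j. Lmat n A 1 j) {1..n} {1..int n} \<and>
            bij_betw (\<lambda>j. Lmat n A n j) {1..n} {1..int n} \<and>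
            bij_betw (\<lambda>i. Lmat n A i 1) {1..n} {1..int n} \<and>
            bij_betw (\<lambda>i. Lmat n A i n) {1..n} {1..int n} \<and>
            (\<forall>i \<in> {1..n}. \<forall>j \<in> {1..n}.
               let K = {k \<in> {1..n}. A i j k \<noteq> 0}; p = card K; r = Lmat n A i j in
               K \<noteq> {} \<and>
               int (Min K) \<le> r \<and> int p \<le> 2 * r - 1 \<and>
               (int (Min K) = r \<longrightarrow> p = 1) \<and>
               (r = 1 \<longrightarrow> A i j 1 = 1 \<and> (\<forall>k \<in> {2..n}. A i j k = 0)) \<and>
               int p \<le> 2 * (int n - r) + 1 \<and>
               (r = int n \<longrightarrow> A i j n = 1 \<and> (\<forall>k \<in> {1..<n}. A i j k = 0))))"
proof -
  have P1: "\<forall>k\<in>{1..n}. \<forall>i\<in>{1..n}. alt_sign (map (\<lambda>j. A i j k) [1..<n+1])"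
   and P2: "\<forall>k\<in>{1..n}. \<forall>j\<in>{1..n}. alt_sign (map (\<lambda>i. A i j k) [1..<n+1])"
    using assms unfolding is_PASHM_def is_ASM_def by blast+
  have G: "(\<Sum>k=1..n. int k) = int ((n + 1) choose 2)" by (rule gauss)
  have part1: "\<forall>i \<in> {1..n}. (\<Sum>j = 1..n. Lmat n A i j) = int ((n + 1) choose 2)"
  proof
    fix i assume i: "i \<in> {1..n}"
    have "(\<Sum>j = 1..n. Lmat n A i j) = (\<Sum>j = 1..n. \<Sum>k=1..n. int k * A i j k)" by (simp add: Lmat_def)
    also have "\<dots> = (\<Sum>k = 1..n. \<Sum>j=1..n. int k * A i j k)" by (rule sum.swap)
    also have "\<dots> = (\<Sum>k = 1..n. int k * (\<Sum>j=1..n. A i j k))" by (simp add: sum_distrib_left)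
    also have "\<dots> = (\<Sum>k = 1..n. int k)"
    proof (rule sum.cong)
      fix k assume "k \<in> {1..n}"
      then have "(\<Sum>j=1..n. A i j k) = 1" using tot P1 i by blast
      then show "int k * (\<Sum>j=1..n. A i j k) = int k" by simp
    qed simp
    finally show "(\<Sum>j = 1..n. Lmat n A i j) = int ((n + 1) choose 2)" using G by simp
  qed
  have part2: "\<forall>j \<in> {1..n}. (\<Sum>i = 1..n. Lmat n A i j) = int ((n + 1) choose 2)"
  proof
    fix j assume j: "j \<in> {1..n}"
    have "(\<Sum>i = 1..n. Lmat n A i j) = (\<Sum>i = 1..n. \<Sum>k=1..n. int k * A i j k)" by (simp add: Lmat_def)
    also have "\<dots> = (\<Sum>k = 1..n. \<Sum>i=1..n. int k * A i j k)" by (rule sum.swap)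
    also have "\<dots> = (\<Sum>k = 1..n. int k * (\<Sum>i=1..n. A i j k))" by (simp add: sum_distrib_left)
    also have "\<dots> = (\<Sum>k = 1..n. int k)"
    proof (rule sum.cong)
      fix k assume "k \<in> {1..n}"
      then have "(\<Sum>i=1..n. A i j k) = 1" using tot P2 j by blast
      then show "int k * (\<Sum>i=1..n. A i j k) = int k" by simp
    qed simp
    finally show "(\<Sum>i = 1..n. Lmat n A i j) = int ((n + 1) choose 2)" using G by simp
  qed
  have part3: "is_ASHM n A \<longrightarrow>
            (\<forall>i \<in> {1..n}. \<forall>j \<in> {1..n}. Lmat n A i j \<in> {1..int n}) \<and>
            bij_betw (\<lambda>j. Lmat n A 1 j) {1..n} {1..int n} \<and>
            bij_betw (\<lambda>j. Lmat n A n j) {1..n} {1..int n} \<and>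
            bij_betw (\<lambda>i. Lmat n A i 1) {1..n} {1..int n} \<and>
            bij_betw (\<lambda>i. Lmat n A i n) {1..n} {1..int n} \<and>
            (\<forall>i \<in> {1..n}. \<forall>j \<in> {1..n}.
               let K = {k \<in> {1..n}. A i j k \<noteq> 0}; p = card K; r = Lmat n A i j in
               K \<noteq> {} \<and>
               int (Min K) \<le> r \<and> int p \<le> 2 * r - 1 \<and>
               (int (Min K) = r \<longrightarrow> p = 1) \<and>
               (r = 1 \<longrightarrow> A i j 1 = 1 \<and> (\<forall>k \<in> {2..n}. A i j k = 0)) \<and>
               int p \<le> 2 * (int n - r) + 1 \<and>
               (r = int n \<longrightarrow> A i j n = 1 \<and> (\<forall>k \<in> {1..<n}. A i j k = 0)))"
  proof
    assume H: "is_ASHM n A"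
    have L3: "\<forall>i \<in> {1..n}. \<forall>j \<in> {1..n}. alt_sign (map (\<lambda>k. A i j k) [1..<n+1])"
     and L2: "\<forall>i \<in> {1..n}. \<forall>k \<in> {1..n}. alt_sign (map (\<lambda>j. A i j k) [1..<n+1])"
     and L1: "\<forall>j \<in> {1..n}. \<forall>k \<in> {1..n}. alt_sign (map (\<lambda>i. A i j k) [1..<n+1])"
      using H unfolding is_ASHM_def by blast+
    have LN: "(let K = {k \<in> {1..n}. A i j k \<noteq> 0}; p = card K; r = Lmat n A i j in
               K \<noteq> {} \<and>
               int (Min K) \<le> r \<and> int p \<le> 2 * r - 1 \<and>
               (int (Min K) = r \<longrightarrow> p = 1) \<and>
               (r = 1 \<longrightarrow> A i j 1 = 1 \<and> (\<forall>k \<in> {2..n}. A i j k = 0)) \<and>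
               int p \<le> 2 * (int n - r) + 1 \<and>
               (r = int n \<longrightarrow> A i j n = 1 \<and> (\<forall>k \<in> {1..<n}. A i j k = 0))) \<and>
        Lmat n A i j \<in> {1..int n}" if "i \<in> {1..n}" "j \<in> {1..n}" for i j
    proof -
      have a: "alt_sign (map (\<lambda>k. A i j k) [1..<n+1])" using L3 that by blast
      show ?thesis using line[OF a] unfolding Let_def Lmat_def by blast
    qed
    have e1: "A 1 j k \<in> {0,1}" "A n j k \<in> {0,1}" if "j \<in> {1..n}" "k \<in> {1..n}" for j k
      using end01[of "\<lambda>i. A i j k" n] L1 that by blast+
    have e2: "A i 1 k \<in> {0,1}" "A i n k \<in> {0,1}" if "i \<in> {1..n}" "k \<in> {1..n}" for i k
      using end01[of "\<lambda>j. A i j k" n] L2 that by blast+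
    have s3: "(\<Sum>k=1..n. A i j k) = 1" if "i \<in> {1..n}" "j \<in> {1..n}" for i j
      using tot L3 that by blast
    have s2: "(\<Sum>j=1..n. A i j k) = 1" if "i \<in> {1..n}" "k \<in> {1..n}" for i k
      using tot L2 that by blast
    have s1: "(\<Sum>i=1..n. A i j k) = 1" if "j \<in> {1..n}" "k \<in> {1..n}" for j k
      using tot L1 that by blast
    have b1: "bij_betw (\<lambda>j. Lmat n A 1 j) {1..n} {1..int n}"
    proof (cases "n \<ge> 1")
      case True
      have "bij_betw (\<lambda>j. \<Sum>k=1..n. int k * A 1 j k) {1..n} {1..int n}"
        by (rule perm_bij) (use e1 s2 s3 True in auto)
      then show ?thesis by (simp add: Lmat_def)
    next
      case False then show ?thesis by (simp add: bij_betw_def)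
    qed
    have b2: "bij_betw (\<lambda>j. Lmat n A n j) {1..n} {1..int n}"
    proof (cases "n \<ge> 1")
      case True
      have "bij_betw (\<lambda>j. \<Sum>k=1..n. int k * A n j k) {1..n} {1..int n}"
        by (rule perm_bij) (use e1 s2 s3 True in auto)
      then show ?thesis by (simp add: Lmat_def)
    next
      case False then show ?thesis by (simp add: bij_betw_def)
    qed
    have b3: "bij_betw (\<lambda>i. Lmat n A i 1) {1..n} {1..int n}"
    proof (cases "n \<ge> 1")
      case True
      have "bij_betw (\<lambda>i. \<Sum>k=1..n. int k * A i 1 k) {1..n} {1..int n}"
        by (rule perm_bij) (use e2 s1 s3 True in auto)
      then show ?thesis by (simp add: Lmat_def)
    next
      case False then show ?thesis by (simp add: bij_betw_def)
    qed
    have b4: "bij_betw (\<lambda>i. Lmat n A i n) {1..n} {1..int n}"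
    proof (cases "n \<ge> 1")
      case True
      have "bij_betw (\<lambda>i. \<Sum>k=1..n. int k * A i n k) {1..n} {1..int n}"
        by (rule perm_bij) (use e2 s1 s3 True in auto)
      then show ?thesis by (simp add: Lmat_def)
    next
      case False then show ?thesis by (simp add: bij_betw_def)
    qed
    show "(\<forall>i \<in> {1..n}. \<forall>j \<in> {1..n}. Lmat n A i j \<in> {1..int n}) \<and>
            bij_betw (\<lambda>j. Lmat n A 1 j) {1..n} {1..int n} \<and>
            bij_betw (\<lambda>j. Lmat n A n j) {1..n} {1..int n} \<and>
            bij_betw (\<lambda>i. Lmat n A i 1) {1..n} {1..int n} \<and>
            bij_betw (\<lambda>i. Lmat n A i n) {1..n} {1..int n} \<and>
            (\<forall>i \<in> {1..n}. \<forall>j \<in> {1..n}.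
               let K = {k \<in> {1..n}. A i j k \<noteq> 0}; p = card K; r = Lmat n A i j in
               K \<noteq> {} \<and>
               int (Min K) \<le> r \<and> int p \<le> 2 * r - 1 \<and>
               (int (Min K) = r \<longrightarrow> p = 1) \<and>
               (r = 1 \<longrightarrow> A i j 1 = 1 \<and> (\<forall>k \<in> {2..n}. A i j k = 0)) \<and>
               int p \<le> 2 * (int n - r) + 1 \<and>
               (r = int n \<longrightarrow> A i j n = 1 \<and> (\<forall>k \<in> {1..<n}. A i j k = 0)))"
      using LN b1 b2 b3 b4 by blast
  qed
  show ?thesis using part1 part2 part3 by blast
qed

end
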